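(* Let $X=\ell_p$ for some $1\le p<\infty$, or $X=c_0$, considered as a Banach algebra under coordinatewise multiplication. Let $\mathcal A$ be a finitely invariant Furstenberg family, $x_0\in X$ and $m\in\mathbb N$, and let $\lambda\in\mathbb C$ with $|\lambda|>1$. If $x_0^m$ is $\mathcal A$-hypercyclic for $\lambda B$, then so is $\sum_{\nu=m}^N\alpha_\nu x_0^\nu$ for any $N\ge m$ and any $\alpha_m,\ldots,\alpha_N\in\mathbb C$ with $\alpha_m\neq0$.
   Context: $\lambda B(x(1),x(2),x(3),\ldots)=(\lambda x(2),\lambda x(3),\ldots)$; powers are coordinatewise. A Furstenberg family is a non-empty family $\mathcal A$ of subsets of $\mathbb N_0$ with $\varnothing\notin\mathcal A$ and such that $A\in\mathcal A$, $A\subset B\subset\mathbb N_0$ imply $B\in\mathcal A$; it is finitely invariant if $A\in\mathcal A$ implies $A\setminus[0,N]\in\mathcal A$ for all $N\ge0$. A vector $x$ is $\mathcal A$-hypercyclic for an operator $T$ if for every non-empty open $U\subset X$, $\{n\ge0:T^nx\in U\}\in\mathcal A$. *)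

theory Defs
  imports "HOL-Analysis.Analysis"
begin

text \<open>The sequence spaces \<open>\<ell>_p\<close> (\<open>1 \<le> p < \<infinity>\<close>) and \<open>c_0\<close> of complex sequences
  \<open>x = (x(1), x(2), \<dots>)\<close>, represented as functions \<open>nat \<Rightarrow> complex\<close> (index 0 = x(1)).\<close>

datatype seqspace = Lp real | C0

fun in_space :: "seqspace \<Rightarrow> (nat \<Rightarrow> complex) \<Rightarrow> bool" where
  "in_space (Lp p) x = summable (\<lambda>n. cmod (x n) powr p)"
| "in_space C0 x = (x \<longlonglongrightarrow> 0)"

definition carrier_space :: "seqspace \<Rightarrow> (nat \<Rightarrow> complex) set" where
  "carrier_space S = {x. in_space S x}"

fun valid_space :: "seqspace \<Rightarrow> bool" where
  "valid_space (Lp p) = (1 \<le> p)"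
| "valid_space C0 = True"

fun seqnorm :: "seqspace \<Rightarrow> (nat \<Rightarrow> complex) \<Rightarrow> real" where
  "seqnorm (Lp p) x = (\<Sum>n. cmod (x n) powr p) powr (1 / p)"
| "seqnorm C0 x = (SUP n. cmod (x n))"

definition open_in_space :: "seqspace \<Rightarrow> (nat \<Rightarrow> complex) set \<Rightarrow> bool" where
  "open_in_space S U \<longleftrightarrow> U \<subseteq> carrier_space S \<and>
     (\<forall>u\<in>U. \<exists>e>0. \<forall>y\<in>carrier_space S. seqnorm S (y - u) < e \<longrightarrow> y \<in> U)"

definition wshift :: "complex \<Rightarrow> (nat \<Rightarrow> complex) \<Rightarrow> (nat \<Rightarrow> complex)" where
  "wshift c x = (\<lambda>n. c * x (Suc n))"

definition furstenberg_family :: "nat set set \<Rightarrow> bool" where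
  "furstenberg_family \<A> \<longleftrightarrow> \<A> \<noteq> {} \<and> {} \<notin> \<A> \<and>
     (\<forall>A B. A \<in> \<A> \<and> A \<subseteq> B \<longrightarrow> B \<in> \<A>)"

definition finitely_invariant :: "nat set set \<Rightarrow> bool" where
  "finitely_invariant \<A> \<longleftrightarrow> (\<forall>A\<in>\<A>. \<forall>N. A - {0..N} \<in> \<A>)"

definition A_hypercyclic ::
  "seqspace \<Rightarrow> nat set set \<Rightarrow> ((nat \<Rightarrow> complex) \<Rightarrow> (nat \<Rightarrow> complex)) \<Rightarrow> (nat \<Rightarrow> complex) \<Rightarrow> bool" where
  "A_hypercyclic S \<A> T x \<longleftrightarrow> x \<in> carrier_space S \<and>
     (\<forall>U. open_in_space S U \<and> U \<noteq> {} \<longrightarrow> {n. (T ^^ n) x \<in> U} \<in> \<A>)"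

end

theory Submission
  imports Defs
begin

lemma convex_powr_pt:
  fixes s t w p :: real
  assumes "0 \<le> s" "0 \<le> t" "0 \<le> w" "w \<le> 1" "1 \<le> p"
  shows "(w * s + (1-w)*t) powr p \<le> w * s powr p + (1-w) * t powr p"
proof -
  have le: "x powr p \<le> x" if "0 \<le> x" "x \<le> 1" for x :: real
    using that assms(5) powr_le_one_le[of x p] by (cases "x = 0") auto
  show ?thesis
  proof (cases "s = 0")
    case True
    have "((1-w)*t) powr p = (1-w) powr p * t powr p" using assms by (simp add: powr_mult)
    also have "\<dots> \<le> (1-w) * t powr p" using le[of "1-w"] assms by (simp add: mult_right_mono)
    finally show ?thesis using True by simp
  next
    case s: False
    show ?thesis
    proof (cases "t = 0")
      case True
      have "(w * s) powr p = w powr p * s powr p" using assms by (simp add: powr_mult)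
      also have "\<dots> \<le> w * s powr p" using le[of "w"] assms by (simp add: mult_right_mono)
      finally show ?thesis using True by simp
    next
      case False
      have "s \<in> {0<..}" "t \<in> {0<..}" using s False assms by auto
      from convex_onD[OF powr_convex[OF assms(5)], of "1-w" s t, OF _ _ this(1) this(2)] assms
      show ?thesis by (simp add: algebra_simps)
    qed
  qed
qed

lemma Lp_dom:
  fixes y v :: "nat \<Rightarrow> complex" and p C :: real
  assumes p: "1 \<le> p" and v: "summable (\<lambda>n. cmod (v n) powr p)" and C: "0 \<le> C"
    and le: "\<And>k. cmod (y k) \<le> C * cmod (v k)"
  shows "summable (\<lambda>n. cmod (y n) powr p) \<and>
    (\<Sum>n. cmod (y n) powr p) powr (1/p) \<le> C * (\<Sum>n. cmod (v n) powr p) powr (1/p)"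
proof -
  have b: "cmod (y n) powr p \<le> C powr p * cmod (v n) powr p" for n
  proof -
    have "cmod (y n) powr p \<le> (C * cmod (v n)) powr p"
      using le[of n] p by (intro powr_mono2) auto
    also have "\<dots> = C powr p * cmod (v n) powr p" using C by (simp add: powr_mult)
    finally show ?thesis .
  qed
  have s2: "summable (\<lambda>n. C powr p * cmod (v n) powr p)" using v by (rule summable_mult)
  have s1: "summable (\<lambda>n. cmod (y n) powr p)"
    by (rule summable_comparison_test[OF _ s2]) (use b in auto)
  have "(\<Sum>n. cmod (y n) powr p) \<le> (\<Sum>n. C powr p * cmod (v n) powr p)"
    by (rule suminf_le[OF b s1 s2])
  also have "\<dots> = C powr p * (\<Sum>n. cmod (v n) powr p)" using v by (rule suminf_mult)
  finally have "(\<Sum>n. cmod (y n) powr p) powr (1/p) \<le> (C powr p * (\<Sum>n. cmod (v n) powr p)) powr (1/p)"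
    using p by (intro powr_mono2) (auto intro!: suminf_nonneg s1)
  also have "\<dots> = (C powr p) powr (1/p) * (\<Sum>n. cmod (v n) powr p) powr (1/p)"
    using C suminf_nonneg[OF v] by (simp add: powr_mult)
  also have "(C powr p) powr (1/p) = C" using p C by (simp add: powr_powr)
  finally show ?thesis using s1 by simp
qed

lemma Lp_zero:
  fixes a :: "nat \<Rightarrow> complex" and p :: real
  assumes "summable (\<lambda>n. cmod (a n) powr p)" "(\<Sum>n. cmod (a n) powr p) = 0"
  shows "\<forall>n. a n = 0"
proof -
  have "\<forall>n. cmod (a n) powr p = 0" using suminf_eq_zero_iff[OF assms(1)] assms(2) by simp
  then show ?thesis by auto
qed

lemma Lp_tri:
  fixes a b :: "nat \<Rightarrow> complex" and p :: real
  assumes p: "1 \<le> p" and a: "summable (\<lambda>n. cmod (a n) powr p)" and b: "summable (\<lambda>n. cmod (b n) powr p)"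
  shows "summable (\<lambda>n. cmod (a n + b n) powr p) \<and>
    (\<Sum>n. cmod (a n + b n) powr p) powr (1/p) \<le> (\<Sum>n. cmod (a n) powr p) powr (1/p) + (\<Sum>n. cmod (b n) powr p) powr (1/p)"
proof -
  define Sa where "Sa = (\<Sum>n. cmod (a n) powr p)"
  define Sb where "Sb = (\<Sum>n. cmod (b n) powr p)"
  define A where "A = Sa powr (1/p)"
  define B where "B = Sb powr (1/p)"
  have Sa0: "Sa \<ge> 0" unfolding Sa_def by (intro suminf_nonneg a) auto
  have Sb0: "Sb \<ge> 0" unfolding Sb_def by (intro suminf_nonneg b) auto
  show ?thesis
  proof (cases "Sa = 0")
    case True
    then have "\<forall>n. a n = 0" using Lp_zero[OF a] True Sa_def by simp
    then show ?thesis using b True Sa_def by simp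
  next
    case Fa: False
    show ?thesis
    proof (cases "Sb = 0")
      case True
      then have "\<forall>n. b n = 0" using Lp_zero[OF b] True Sb_def by simp
      then show ?thesis using a True Sb_def by simp
    next
      case False
      have Sa: "Sa > 0" "Sb > 0" using Fa False Sa0 Sb0 by auto
      have AB: "A > 0" "B > 0" using Sa by (auto simp: A_def B_def)
      have Ap: "A powr p = Sa" "B powr p = Sb" using Sa p by (auto simp: A_def B_def powr_powr)
      define l where "l = A / (A + B)"
      have l: "0 \<le> l" "l \<le> 1" "1 - l = B / (A+B)" using AB by (auto simp: l_def field_simps)
      define g where "g n = (A+B) powr p * (l / Sa * cmod (a n) powr p + (1-l) / Sb * cmod (b n) powr p)" for n
      have bnd: "cmod (a n + b n) powr p \<le> g n" for n
      proof -
        have "cmod (a n + b n) \<le> cmod (a n) + cmod (b n)" by (simp add: norm_triangle_ineq)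
        also have "\<dots> = (A+B) * (l * (cmod (a n) / A) + (1-l) * (cmod (b n)/B))"
        proof -
          have e1: "(A+B) * l = A" "(A+B) * (1-l) = B" using AB l(3) by (auto simp: l_def)
          have "(A+B) * (l * (cmod (a n) / A) + (1-l) * (cmod (b n)/B))
             = ((A+B) * l) * (cmod (a n) / A) + ((A+B) * (1-l)) * (cmod (b n)/B)"
            by (simp only: distrib_left mult.assoc)
          also have "\<dots> = cmod (a n) + cmod (b n)" using e1 AB by simp
          finally show ?thesis by simp
        qed
        finally have "cmod (a n + b n) powr p \<le> ((A+B) * (l * (cmod (a n) / A) + (1-l) * (cmod (b n)/B))) powr p"
          using p by (intro powr_mono2) auto
        also have "\<dots> = (A+B) powr p * (l * (cmod (a n) / A) + (1-l) * (cmod (b n)/B)) powr p"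
          using AB l by (simp add: powr_mult)
        also have "\<dots> \<le> (A+B) powr p * (l * (cmod (a n) / A) powr p + (1-l) * (cmod (b n)/B) powr p)"
          using AB l p by (intro mult_left_mono convex_powr_pt) auto
        also have "\<dots> = g n" unfolding g_def using AB Ap by (simp add: powr_divide)
        finally show ?thesis .
      qed
      have gs: "g sums ((A+B) powr p * (l / Sa * Sa + (1-l) / Sb * Sb))"
        unfolding g_def Sa_def Sb_def
        by (intro sums_mult sums_add summable_sums a b)
      have g1: "(A+B) powr p * (l / Sa * Sa + (1-l) / Sb * Sb) = (A+B) powr p" using Sa by simp
      have s1: "summable (\<lambda>n. cmod (a n + b n) powr p)"
        by (rule summable_comparison_test[OF _ sums_summable[OF gs]]) (use bnd in auto)
      have "(\<Sum>n. cmod (a n + b n) powr p) \<le> (A+B) powr p"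
        using suminf_le[OF bnd s1 sums_summable[OF gs]] sums_unique[OF gs] g1 by simp
      then have "(\<Sum>n. cmod (a n + b n) powr p) powr (1/p) \<le> ((A+B) powr p) powr (1/p)"
        using p by (intro powr_mono2) (auto intro!: suminf_nonneg s1)
      also have "\<dots> = A + B" using AB p by (simp add: powr_powr)
      finally show ?thesis using s1 by (simp add: A_def B_def Sa_def Sb_def)
    qed
  qed
qed

lemma C0_bdd:
  fixes x :: "nat \<Rightarrow> complex"
  assumes "x \<longlonglongrightarrow> 0"
  shows "bdd_above (range (\<lambda>n. cmod (x n)))"
proof -
  have "convergent x" using assms by (auto simp: convergent_def)
  then show ?thesis by (intro Bseq_bdd_above' convergent_imp_Bseq)
qed

lemma C0_upper:
  fixes x :: "nat \<Rightarrow> complex"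
  assumes "x \<longlonglongrightarrow> 0"
  shows "cmod (x k) \<le> (SUP n. cmod (x n))"
  by (rule cSUP_upper[OF UNIV_I C0_bdd[OF assms]])

lemma sp_dom:
  assumes S: "valid_space S" and v: "v \<in> carrier_space S" and C: "0 \<le> C"
    and le: "\<And>k. cmod (y k) \<le> C * cmod (v k)"
  shows "y \<in> carrier_space S \<and> seqnorm S y \<le> C * seqnorm S v"
proof (cases S)
  case (Lp p)
  have p: "1 \<le> p" using S Lp by simp
  have vs: "summable (\<lambda>n. cmod (v n) powr p)" using v Lp by (simp add: carrier_space_def)
  have "summable (\<lambda>n. cmod (y n) powr p) \<and>
    (\<Sum>n. cmod (y n) powr p) powr (1/p) \<le> C * (\<Sum>n. cmod (v n) powr p) powr (1/p)"
    by (rule Lp_dom[OF p vs C le])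
  then show ?thesis unfolding Lp carrier_space_def mem_Collect_eq in_space.simps seqnorm.simps .
next
  case C0
  have v0: "v \<longlonglongrightarrow> 0" using v C0 by (simp add: carrier_space_def)
  have "(\<lambda>k. C * cmod (v k)) \<longlonglongrightarrow> C * 0"
    by (intro tendsto_mult tendsto_const tendsto_norm_zero v0)
  then have g0: "(\<lambda>k. C * cmod (v k)) \<longlonglongrightarrow> 0" by simp
  have ev: "eventually (\<lambda>k. norm (y k) \<le> C * cmod (v k)) sequentially"
    using le by (intro always_eventually allI) simp
  have y0: "y \<longlonglongrightarrow> 0" by (rule Lim_null_comparison[OF ev g0])
  have "(SUP n. cmod (y n)) \<le> C * (SUP n. cmod (v n))"
  proof (rule cSUP_least)
    fix n
    show "cmod (y n) \<le> C * (SUP n. cmod (v n))"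
      using le[of n] mult_left_mono[OF C0_upper[OF v0, of n] C] by linarith
  qed auto
  then show ?thesis using C0 y0 by (simp add: carrier_space_def)
qed

lemma sp_tri:
  assumes S: "valid_space S" and a: "a \<in> carrier_space S" and b: "b \<in> carrier_space S"
  shows "(\<lambda>n. a n + b n) \<in> carrier_space S \<and> seqnorm S (\<lambda>n. a n + b n) \<le> seqnorm S a + seqnorm S b"
proof (cases S)
  case (Lp p)
  have p: "1 \<le> p" using S Lp by simp
  have as: "summable (\<lambda>n. cmod (a n) powr p)" using a Lp by (simp add: carrier_space_def)
  have bs: "summable (\<lambda>n. cmod (b n) powr p)" using b Lp by (simp add: carrier_space_def)
  from Lp_tri[OF p as bs] show ?thesis unfolding Lp carrier_space_def mem_Collect_eq in_space.simps seqnorm.simps .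
next
  case C0
  have a0: "a \<longlonglongrightarrow> 0" using a C0 by (simp add: carrier_space_def)
  have b0: "b \<longlonglongrightarrow> 0" using b C0 by (simp add: carrier_space_def)
  have ab0: "(\<lambda>n. a n + b n) \<longlonglongrightarrow> 0" using tendsto_add[OF a0 b0] by simp
  have "(SUP n. cmod (a n + b n)) \<le> (SUP n. cmod (a n)) + (SUP n. cmod (b n))"
  proof (rule cSUP_least)
    fix n
    show "cmod (a n + b n) \<le> (SUP n. cmod (a n)) + (SUP n. cmod (b n))"
      using norm_triangle_ineq[of "a n" "b n"] C0_upper[OF a0, of n] C0_upper[OF b0, of n] by linarith
  qed auto
  then show ?thesis using C0 ab0 by (simp add: carrier_space_def)
qed

lemma sp_nonneg:
  assumes S: "valid_space S" and a: "a \<in> carrier_space S"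
  shows "0 \<le> seqnorm S a"
proof (cases S)
  case (Lp p)
  then show ?thesis by simp
next
  case C0
  have "a \<longlonglongrightarrow> 0" using a C0 by (simp add: carrier_space_def)
  from C0_upper[OF this, of 0] have "0 \<le> (SUP n. cmod (a n))" using norm_ge_zero[of "a 0"] by linarith
  then show ?thesis using C0 by simp
qed

lemma sp_tends0:
  assumes S: "valid_space S" and a: "a \<in> carrier_space S"
  shows "a \<longlonglongrightarrow> 0"
proof (cases S)
  case (Lp p)
  with S have p: "1 \<le> p" by simp
  have s: "summable (\<lambda>n. cmod (a n) powr p)" using a Lp by (simp add: carrier_space_def)
  have "(\<lambda>n. cmod (a n) powr p) \<longlonglongrightarrow> 0" by (rule summable_LIMSEQ_zero[OF s])
  then have "(\<lambda>n. (cmod (a n) powr p) powr (1/p)) \<longlonglongrightarrow> 0"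
    by (rule tendsto_zero_powrI[OF _ tendsto_const]) (use p in auto)
  moreover have "(cmod (a n) powr p) powr (1/p) = cmod (a n)" for n using p by (simp add: powr_powr)
  ultimately have "(\<lambda>n. cmod (a n)) \<longlonglongrightarrow> 0" by (simp only:)
  then show ?thesis by (simp add: tendsto_norm_zero_iff)
next
  case C0
  then show ?thesis using a by (simp add: carrier_space_def)
qed

lemma sp_diff:
  assumes S: "valid_space S" and a: "a \<in> carrier_space S" and b: "b \<in> carrier_space S"
  shows "a - b \<in> carrier_space S"
proof -
  have "(\<lambda>k. - b k) \<in> carrier_space S" using sp_dom[OF S b, of 1 "\<lambda>k. - b k"] by simp
  from sp_tri[OF S a this] show ?thesis by (simp add: fun_diff_def)
qed

lemma wshift_pow: "(wshift c ^^ n) x = (\<lambda>k. c ^ n * x (k + n))"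
  by (induction n) (auto simp: wshift_def)

lemma poly_split:
  fixes \<alpha> :: "nat \<Rightarrow> complex"
  assumes "m \<le> N"
  shows "(\<Sum>\<nu>=m..N. \<alpha> \<nu> * t ^ \<nu>) = t ^ m * (\<alpha> m + (\<Sum>\<nu>=Suc m..N. \<alpha> \<nu> * t ^ (\<nu> - m)))"
proof -
  have "(\<Sum>\<nu>=m..N. \<alpha> \<nu> * t ^ \<nu>) = \<alpha> m * t ^ m + (\<Sum>\<nu>=Suc m..N. \<alpha> \<nu> * t ^ \<nu>)"
    using assms by (simp add: sum.atLeast_Suc_atMost)
  also have "(\<Sum>\<nu>=Suc m..N. \<alpha> \<nu> * t ^ \<nu>) = (\<Sum>\<nu>=Suc m..N. t ^ m * (\<alpha> \<nu> * t ^ (\<nu> - m)))"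
  proof (rule sum.cong)
    fix \<nu> assume "\<nu> \<in> {Suc m..N}"
    then have "\<nu> = m + (\<nu> - m)" by auto
    then have "t ^ \<nu> = t ^ m * t ^ (\<nu> - m)" by (metis power_add)
    then show "\<alpha> \<nu> * t ^ \<nu> = t ^ m * (\<alpha> \<nu> * t ^ (\<nu> - m))" by simp
  qed simp
  finally show ?thesis by (simp add: sum_distrib_left algebra_simps)
qed

lemma q_bound:
  fixes \<alpha> :: "nat \<Rightarrow> complex"
  assumes "cmod t \<le> M"
  shows "cmod (\<Sum>\<nu>=Suc m..N. \<alpha> \<nu> * t ^ (\<nu> - m)) \<le> (\<Sum>\<nu>=Suc m..N. cmod (\<alpha> \<nu>) * M ^ (\<nu> - m))"
proof -
  have "cmod (\<Sum>\<nu>=Suc m..N. \<alpha> \<nu> * t ^ (\<nu> - m)) \<le> (\<Sum>\<nu>=Suc m..N. cmod (\<alpha> \<nu> * t ^ (\<nu> - m)))"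
    by (rule norm_sum)
  also have "\<dots> \<le> (\<Sum>\<nu>=Suc m..N. cmod (\<alpha> \<nu>) * M ^ (\<nu> - m))"
  proof (rule sum_mono)
    fix \<nu>
    have "cmod t ^ (\<nu> - m) \<le> M ^ (\<nu> - m)" using assms by (intro power_mono) auto
    then show "cmod (\<alpha> \<nu> * t ^ (\<nu> - m)) \<le> cmod (\<alpha> \<nu>) * M ^ (\<nu> - m)"
      by (simp add: norm_mult norm_power mult_left_mono)
  qed
  finally show ?thesis .
qed

lemma q_small:
  fixes \<alpha> :: "nat \<Rightarrow> complex"
  assumes "cmod t \<le> e" "e \<le> 1"
  shows "cmod (\<Sum>\<nu>=Suc m..N. \<alpha> \<nu> * t ^ (\<nu> - m)) \<le> e * (\<Sum>\<nu>=Suc m..N. cmod (\<alpha> \<nu>))"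
proof -
  have e0: "0 \<le> e" using assms(1) norm_ge_zero order_trans by blast
  have "(\<Sum>\<nu>=Suc m..N. cmod (\<alpha> \<nu>) * e ^ (\<nu> - m)) \<le> (\<Sum>\<nu>=Suc m..N. cmod (\<alpha> \<nu>) * e)"
  proof (rule sum_mono)
    fix \<nu> assume "\<nu> \<in> {Suc m..N}"
    then have "e ^ (\<nu> - m) \<le> e ^ 1" using e0 assms(2) by (intro power_decreasing) auto
    then show "cmod (\<alpha> \<nu>) * e ^ (\<nu> - m) \<le> cmod (\<alpha> \<nu>) * e" by (simp add: mult_left_mono)
  qed
  then show ?thesis using q_bound[OF assms(1), of \<alpha> m N] by (simp add: sum_distrib_left mult.commute)
qed

theorem proposition2p1:
  fixes S :: seqspace and \<A> :: "nat set set" and x0 :: "nat \<Rightarrow> complex"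
    and m N :: nat and c :: complex and \<alpha> :: "nat \<Rightarrow> complex"
  assumes "valid_space S"
    and "furstenberg_family \<A>" and "finitely_invariant \<A>"
    and "x0 \<in> carrier_space S"
    and "m \<ge> 1"
    and "cmod c > 1"
    and "A_hypercyclic S \<A> (wshift c) (\<lambda>k. x0 k ^ m)"
    and "N \<ge> m" and "\<alpha> m \<noteq> 0"
  shows "A_hypercyclic S \<A> (wshift c) (\<lambda>k. \<Sum>\<nu>=m..N. \<alpha> \<nu> * x0 k ^ \<nu>)"
proof -
  note S = assms(1)
  define T where "T = wshift c"
  define y where "y = (\<lambda>k. x0 k ^ m)"
  define q where "q t = (\<Sum>\<nu>=Suc m..N. \<alpha> \<nu> * t ^ (\<nu> - m))" for t
  define z where "z = (\<lambda>k. \<Sum>\<nu>=m..N. \<alpha> \<nu> * x0 k ^ \<nu>)"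
  define a where "a = \<alpha> m"
  define K where "K = (\<Sum>\<nu>=Suc m..N. cmod (\<alpha> \<nu>))"
  have a0: "a \<noteq> 0" using assms(9) by (simp add: a_def)
  have K0: "0 \<le> K" unfolding K_def by (intro sum_nonneg) auto
  have zq: "z k = y k * (a + q (x0 k))" for k
    unfolding z_def y_def q_def a_def using poly_split[OF assms(8)] by simp
  have ycar: "y \<in> carrier_space S" and hc: "\<And>U. open_in_space S U \<Longrightarrow> U \<noteq> {} \<Longrightarrow> {n. (T ^^ n) y \<in> U} \<in> \<A>"
    using assms(7) unfolding A_hypercyclic_def y_def T_def by auto
  have x00: "x0 \<longlonglongrightarrow> 0" by (rule sp_tends0[OF S assms(4)])
  then have cx: "convergent x0" by (auto simp: convergent_def)
  obtain M where M: "\<And>k. cmod (x0 k) \<le> M" using convergent_imp_Bseq[OF cx] unfolding Bseq_def by blast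
  define KM where "KM = (\<Sum>\<nu>=Suc m..N. cmod (\<alpha> \<nu>) * M ^ (\<nu> - m))"
  have KM0: "0 \<le> KM"
  proof -
    have "0 \<le> M" using M[of 0] norm_ge_zero[of "x0 0"] by linarith
    then show ?thesis unfolding KM_def by (intro sum_nonneg mult_nonneg_nonneg) auto
  qed
  have zcar: "z \<in> carrier_space S"
  proof -
    have "cmod (z k) \<le> (cmod a + KM) * cmod (y k)" for k
    proof -
      have "cmod (q (x0 k)) \<le> KM" unfolding q_def KM_def by (rule q_bound[OF M])
      then have "cmod (a + q (x0 k)) \<le> cmod a + KM" using norm_triangle_ineq[of a "q (x0 k)"] by linarith
      then show ?thesis unfolding zq by (simp add: norm_mult mult_left_mono mult.commute)
    qed
    then show ?thesis using sp_dom[OF S ycar, of "cmod a + KM" z] KM0 by auto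
  qed
  have main: "{n. (T ^^ n) z \<in> U} \<in> \<A>" if U: "open_in_space S U" "U \<noteq> {}" for U
  proof -
    obtain u where u: "u \<in> U" using U(2) by auto
    have Ucar: "U \<subseteq> carrier_space S" using U(1) by (simp add: open_in_space_def)
    have ucar: "u \<in> carrier_space S" using u Ucar by auto
    obtain e where e: "e > 0" and eU: "\<And>y'. y' \<in> carrier_space S \<Longrightarrow> seqnorm S (y' - u) < e \<Longrightarrow> y' \<in> U"
      using U(1) u unfolding open_in_space_def by blast
    define u' where "u' = (\<lambda>k. u k / a)"
    have u'car: "u' \<in> carrier_space S"
      using sp_dom[OF S ucar, of "1 / cmod a" u'] a0 by (auto simp: u'_def norm_divide)
    define Nu where "Nu = seqnorm S u'"
    have Nu0: "0 \<le> Nu" unfolding Nu_def by (rule sp_nonneg[OF S u'car])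
    define \<eta> where "\<eta> = e / (2 * cmod a)"
    have \<eta>0: "\<eta> > 0" using e a0 by (simp add: \<eta>_def)
    define V where "V = {w \<in> carrier_space S. seqnorm S (w - u') < \<eta>}"
    have Vopen: "open_in_space S V"
      unfolding open_in_space_def
    proof (intro conjI ballI)
      show "V \<subseteq> carrier_space S" by (auto simp: V_def)
    next
      fix w assume w: "w \<in> V"
      have wcar: "w \<in> carrier_space S" using w by (simp add: V_def)
      show "\<exists>r>0. \<forall>y'\<in>carrier_space S. seqnorm S (y' - w) < r \<longrightarrow> y' \<in> V"
      proof (intro exI[of _ "\<eta> - seqnorm S (w - u')"] conjI ballI impI)
        show "\<eta> - seqnorm S (w - u') > 0" using w by (simp add: V_def)
        fix y' assume y': "y' \<in> carrier_space S" "seqnorm S (y' - w) < \<eta> - seqnorm S (w - u')"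
        have "seqnorm S (\<lambda>n. (y' - w) n + (w - u') n) \<le> seqnorm S (y' - w) + seqnorm S (w - u')"
          using sp_tri[OF S sp_diff[OF S y'(1) wcar] sp_diff[OF S wcar u'car]] by simp
        moreover have "(\<lambda>n. (y' - w) n + (w - u') n) = y' - u'" by (simp add: fun_diff_def)
        ultimately show "y' \<in> V" using y' by (simp add: V_def)
      qed
    qed
    have u'V: "u' \<in> V"
    proof -
      have "seqnorm S (u' - u') \<le> 0 * seqnorm S u'"
        using sp_dom[OF S u'car, of 0 "u' - u'"] by simp
      then show ?thesis using u'car \<eta>0 by (simp add: V_def)
    qed
    define A0 where "A0 = {n. (T ^^ n) y \<in> V}"
    have A0: "A0 \<in> \<A>" unfolding A0_def using hc[OF Vopen] u'V by blast
    define \<delta> where "\<delta> = e / (2 * (\<eta> + Nu + 1))"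
    have \<delta>0: "\<delta> > 0" using e \<eta>0 Nu0 by (simp add: \<delta>_def)
    have \<delta>b: "\<delta> * (\<eta> + Nu) < e / 2"
    proof -
      have "\<delta> * (\<eta> + Nu) = (e/2) * ((\<eta> + Nu) / (\<eta> + Nu + 1))"
        using \<eta>0 Nu0 by (simp add: \<delta>_def field_simps)
      also have "\<dots> < (e/2) * 1" using e \<eta>0 Nu0 by (intro mult_strict_left_mono) auto
      finally show ?thesis by simp
    qed
    define \<epsilon> where "\<epsilon> = min 1 (\<delta> / (K + 1))"
    have \<epsilon>0: "\<epsilon> > 0" using \<delta>0 K0 by (simp add: \<epsilon>_def)
    obtain n0 where n0: "\<And>j. j \<ge> n0 \<Longrightarrow> cmod (x0 j) < \<epsilon>"
      using x00 \<epsilon>0 unfolding LIMSEQ_iff by force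
    have qsmall: "cmod (q (x0 j)) \<le> \<delta>" if "j \<ge> n0" for j
    proof -
      have "cmod (q (x0 j)) \<le> \<epsilon> * K"
        unfolding q_def K_def using n0[OF that] by (intro q_small) (auto simp: \<epsilon>_def)
      also have "\<dots> \<le> (\<delta> / (K + 1)) * K" using K0 by (intro mult_right_mono) (auto simp: \<epsilon>_def)
      also have "\<dots> \<le> \<delta>" using K0 \<delta>0 by (simp add: field_simps)
      finally show ?thesis .
    qed
    have sub: "A0 - {0..n0} \<subseteq> {n. (T ^^ n) z \<in> U}"
    proof
      fix n assume n: "n \<in> A0 - {0..n0}"
      define w where "w = (T ^^ n) y"
      have wV: "w \<in> V" using n by (simp add: A0_def w_def)
      have wcar: "w \<in> carrier_space S" and wu: "seqnorm S (w - u') < \<eta>" using wV by (auto simp: V_def)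
      have wf: "w = (\<lambda>k. c ^ n * y (k + n))" unfolding w_def T_def by (rule wshift_pow)
      have Tz: "(T ^^ n) z = (\<lambda>k. w k * (a + q (x0 (k + n))))"
        unfolding T_def wshift_pow wf zq by (simp add: mult.assoc)
      have qn: "cmod (q (x0 (k + n))) \<le> \<delta>" for k using n by (intro qsmall) auto
      define r where "r = (\<lambda>k. w k * q (x0 (k + n)))"
      define d where "d = (\<lambda>k. a * (w - u') k)"
      have wmu: "w - u' \<in> carrier_space S" by (rule sp_diff[OF S wcar u'car])
      have rb: "cmod (r k) \<le> \<delta> * cmod (w k)" for k
        using mult_left_mono[OF qn[of k] norm_ge_zero[of "w k"]] by (simp add: r_def norm_mult mult.commute)
      have r: "r \<in> carrier_space S \<and> seqnorm S r \<le> \<delta> * seqnorm S w"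
        using sp_dom[OF S wcar, of \<delta> r] \<delta>0 rb by auto
      have d: "d \<in> carrier_space S \<and> seqnorm S d \<le> cmod a * seqnorm S (w - u')"
        using sp_dom[OF S wmu, of "cmod a" d] by (auto simp: d_def norm_mult)
      have "seqnorm S (\<lambda>k. (w - u') k + u' k) \<le> seqnorm S (w - u') + seqnorm S u'"
        using sp_tri[OF S wmu u'car] by simp
      moreover have "(\<lambda>k. (w - u') k + u' k) = w" by (simp add: fun_diff_def)
      ultimately have nw: "seqnorm S w \<le> seqnorm S (w - u') + Nu" by (simp add: Nu_def)
      have Tzcar: "(T ^^ n) z \<in> carrier_space S"
      proof -
        have "cmod ((T ^^ n) z k) \<le> (cmod a + \<delta>) * cmod (w k)" for k
        proof -
          have "cmod (a + q (x0 (k + n))) \<le> cmod a + \<delta>"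
            using norm_triangle_ineq[of a "q (x0 (k + n))"] qn[of k] by linarith
          then show ?thesis unfolding Tz by (simp add: norm_mult mult_left_mono mult.commute)
        qed
        then show ?thesis using sp_dom[OF S wcar, of "cmod a + \<delta>" "(T ^^ n) z"] \<delta>0 by auto
      qed
      have eq: "(T ^^ n) z - u = (\<lambda>k. d k + r k)"
        unfolding Tz d_def r_def u'_def using a0 by (auto simp: fun_diff_def field_simps)
      have "seqnorm S ((T ^^ n) z - u) \<le> seqnorm S d + seqnorm S r"
        unfolding eq using sp_tri[OF S conjunct1[OF d] conjunct1[OF r]] by simp
      also have "\<dots> \<le> cmod a * seqnorm S (w - u') + \<delta> * (seqnorm S (w - u') + Nu)"
        using d r nw \<delta>0 by (smt (verit) mult_left_mono)
      also have "\<dots> < e"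
      proof -
        have "cmod a * seqnorm S (w - u') < cmod a * \<eta>" using wu a0 by simp
        also have "cmod a * \<eta> = e / 2" using a0 by (simp add: \<eta>_def)
        finally have 1: "cmod a * seqnorm S (w - u') < e / 2" .
        have "\<delta> * (seqnorm S (w - u') + Nu) \<le> \<delta> * (\<eta> + Nu)" using wu \<delta>0 by simp
        then show ?thesis using 1 \<delta>b by linarith
      qed
      finally show "n \<in> {n. (T ^^ n) z \<in> U}" using eU[OF Tzcar] by simp
    qed
    have "A0 - {0..n0} \<in> \<A>" using assms(3) A0 by (simp add: finitely_invariant_def)
    then show ?thesis using assms(2) sub unfolding furstenberg_family_def by blast
  qed
  show ?thesis
    unfolding A_hypercyclic_def using zcar main by (simp add: z_def T_def)
qed

end
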